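(* Let MACRO be run with threshold $\varepsilon>0$ and any subroutine, and assume that the discrepancy bounds are a pseudo-metric on time points, i.e. $M_{i,i}=0$, $M_{i,j}=M_{j,i}$ and $M_{i,j}\le M_{i,l}+M_{l,j}$ for all $i,j,l\ge 1$. For $n\ge 0$ and $\theta>0$ let $\mathcal{N}(M,n,\theta)$ denote the smallest cardinality of a set $S\subseteq\{1,\dots,n+1\}$ such that for every $t\in\{1,\dots,n+1\}$ there is $s\in S$ with $M_{t,s}\le\theta$ (this is the $\theta$-covering number of the conditional distributions $P_0,\dots,P_n$, where $P_t=\mathbb{P}(\cdot\mid z_1,\dots,z_t)$ is identified with time point $t+1$, with respect to $M$). Then for every $n$, $$\mathcal{N}(M,n,\varepsilon)\le N_n\le \mathcal{N}(M,n,\varepsilon/2).$$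
   Context: Setting: $z_1,z_2,\dots$ is a stochastic process with values in a measurable space $\mathcal{Z}$ and law $\mathbb{P}$; $\mathcal{H}$ is a set of hypotheses and $\ell:\mathcal{H}\times\mathcal{Z}\to[0,1]$ a loss, measurable in its second argument. For $t\ge 0$ the conditional risk is $R_t(h)=\mathbb{E}[\ell(h,z_{t+1})\mid z_1,\dots,z_t]$. The pairwise discrepancy between time points $i,j\ge1$ is $d_{i,j}=\sup_{h\in\mathcal{H}}|R_{i-1}(h)-R_{j-1}(h)|$. Discrepancy bounds: nonnegative random variables $M_{i,j}$ ($i,j\ge1$), $M_{i,j}$ being a function of $z_1,\dots,z_{\max(i,j)-1}$, with $d_{i,j}\le M_{i,j}$ almost surely. MACRO with threshold $\varepsilon>0$ and a learning subroutine: it maintains instances $S_1,\dots,S_N$ of the subroutine, instance $S_j$ having a creation time $\tau_j$; initially $N=0$. At each step $n=0,1,2,\dots$ (having observed $z_1,\dots,z_n$): (i) let $J=\{j\le N: M_{n+1,\tau_j}\le\varepsilon\}$; if $J=\emptyset$, create a new instance $S_{N+1}$ with $\tau_{N+1}=n+1$, set $N\leftarrow N+1$ and $J=\{N\}$; (ii) let $I_n=\arg\min_{j\in J}M_{n+1,\tau_j}$ (ties broken by a fixed rule) and output $h_n$, the current output hypothesis of $S_{I_n}$; (iii) observe $z_{n+1}$ and update every $S_j$, $j\in J$, with $z_{n+1}$. $N_n$ denotes the value of $N$ after step (i) of step $n$. *)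

theory Defs
  imports Complex_Main
begin

text \<open>One realization of the discrepancy bounds is a function
  M :: nat => nat => real, where M i j stands for M_{i,j} (time points i, j >= 1).
  The instance-creation behaviour of MACRO depends only on these values.\<close>

text \<open>macro_taus M eps n: list of creation times [tau_1, ..., tau_N] of the instances
  of MACRO after sub-step (i) of step n.  Its length is N_n.\<close>
fun macro_taus :: "(nat \<Rightarrow> nat \<Rightarrow> real) \<Rightarrow> real \<Rightarrow> nat \<Rightarrow> nat list" where
  "macro_taus M eps 0 = [1]"
| "macro_taus M eps (Suc n) =
     (let L = macro_taus M eps n in
      if (\<exists>\<tau>\<in>set L. M (Suc n + 1) \<tau> \<le> eps) then L else L @ [Suc n + 1])"

definition macro_N :: "(nat \<Rightarrow> nat \<Rightarrow> real) \<Rightarrow> real \<Rightarrow> nat \<Rightarrow> nat" where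
  "macro_N M eps n = length (macro_taus M eps n)"

definition covering_number :: "(nat \<Rightarrow> nat \<Rightarrow> real) \<Rightarrow> nat \<Rightarrow> real \<Rightarrow> nat" where
  "covering_number M n \<theta> =
     (LEAST k. \<exists>S. S \<subseteq> {1..n+1} \<and> (\<forall>t\<in>{1..n+1}. \<exists>s\<in>S. M t s \<le> \<theta>) \<and> card S = k)"

end

theory Submission
  imports Defs
begin

lemma macro_inv:
  fixes M :: "nat \<Rightarrow> nat \<Rightarrow> real"
  assumes eps_pos: "eps > 0"
    and refl: "\<And>i. i \<ge> 1 \<Longrightarrow> M i i = 0"
    and sym: "\<And>i j. i \<ge> 1 \<Longrightarrow> j \<ge> 1 \<Longrightarrow> M i j = M j i"
  shows "set (macro_taus M eps n) \<subseteq> {1..n+1} \<and> distinct (macro_taus M eps n)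
    \<and> (\<forall>t\<in>{1..n+1}. \<exists>\<tau>\<in>set (macro_taus M eps n). M t \<tau> \<le> eps)
    \<and> (\<forall>a\<in>set (macro_taus M eps n). \<forall>b\<in>set (macro_taus M eps n). a \<noteq> b \<longrightarrow> M a b > eps)"
proof (induction n)
  case 0
  then show ?case using refl[of 1] eps_pos by auto
next
  case (Suc n)
  let ?L = "macro_taus M eps n"
  show ?case
  proof (cases "\<exists>\<tau>\<in>set ?L. M (Suc n + 1) \<tau> \<le> eps")
    case True
    have e: "macro_taus M eps (Suc n) = ?L" using True by (simp add: Let_def)
    have cov: "\<forall>t\<in>{1..Suc n+1}. \<exists>\<tau>\<in>set ?L. M t \<tau> \<le> eps"
    proof
      fix t assume t: "t \<in> {1..Suc n+1}"
      show "\<exists>\<tau>\<in>set ?L. M t \<tau> \<le> eps"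
      proof (cases "t = Suc n + 1")
        case True then show ?thesis using \<open>\<exists>\<tau>\<in>set ?L. M (Suc n + 1) \<tau> \<le> eps\<close> by simp
      next
        case False then show ?thesis using Suc.IH t by auto
      qed
    qed
    show ?thesis unfolding e using Suc.IH cov by auto
  next
    case False
    have e: "macro_taus M eps (Suc n) = ?L @ [Suc n + 1]" using False by (simp add: Let_def)
    have far: "\<forall>\<tau>\<in>set ?L. M (Suc n + 1) \<tau> > eps" using False by auto
    have far2: "\<forall>\<tau>\<in>set ?L. M \<tau> (Suc n + 1) > eps"
    proof
      fix \<tau> assume "\<tau> \<in> set ?L"
      moreover then have "\<tau> \<ge> 1" using Suc.IH by auto
      ultimately show "M \<tau> (Suc n + 1) > eps" using far sym[of \<tau> "Suc n + 1"] by auto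
    qed
    have nin: "Suc n + 1 \<notin> set ?L" using Suc.IH by auto
    have cov: "\<forall>t\<in>{1..Suc n+1}. \<exists>\<tau>\<in>set (?L @ [Suc n + 1]). M t \<tau> \<le> eps"
    proof
      fix t assume t: "t \<in> {1..Suc n+1}"
      show "\<exists>\<tau>\<in>set (?L @ [Suc n + 1]). M t \<tau> \<le> eps"
      proof (cases "t = Suc n + 1")
        case True then show ?thesis using refl[of t] eps_pos by auto
      next
        case False then show ?thesis using Suc.IH t by auto
      qed
    qed
    have sep: "\<forall>a\<in>set (?L @ [Suc n + 1]). \<forall>b\<in>set (?L @ [Suc n + 1]). a \<noteq> b \<longrightarrow> M a b > eps"
      using Suc.IH far far2 by auto
    show ?thesis unfolding e using Suc.IH cov sep nin by auto
  qed
qed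

theorem lemma1:
  fixes M :: "nat \<Rightarrow> nat \<Rightarrow> real" and eps :: real and n :: nat
  assumes eps_pos: "eps > 0"
    and nonneg: "\<And>i j. i \<ge> 1 \<Longrightarrow> j \<ge> 1 \<Longrightarrow> M i j \<ge> 0"
    and refl: "\<And>i. i \<ge> 1 \<Longrightarrow> M i i = 0"
    and sym: "\<And>i j. i \<ge> 1 \<Longrightarrow> j \<ge> 1 \<Longrightarrow> M i j = M j i"
    and tri: "\<And>i j l. i \<ge> 1 \<Longrightarrow> j \<ge> 1 \<Longrightarrow> l \<ge> 1 \<Longrightarrow> M i j \<le> M i l + M l j"
  shows "covering_number M n eps \<le> macro_N M eps n
         \<and> macro_N M eps n \<le> covering_number M n (eps / 2)"
proof
  let ?L = "macro_taus M eps n"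
  have I: "set ?L \<subseteq> {1..n+1}" "distinct ?L"
    "\<forall>t\<in>{1..n+1}. \<exists>\<tau>\<in>set ?L. M t \<tau> \<le> eps"
    "\<forall>a\<in>set ?L. \<forall>b\<in>set ?L. a \<noteq> b \<longrightarrow> M a b > eps"
    using macro_inv[of eps M n] eps_pos refl sym by auto
  have cl: "card (set ?L) = macro_N M eps n"
    using I(2) distinct_card macro_N_def by metis
  show "covering_number M n eps \<le> macro_N M eps n"
    unfolding covering_number_def
    by (rule Least_le) (use I cl in blast)
  let ?P = "\<lambda>k. \<exists>S. S \<subseteq> {1..n+1} \<and> (\<forall>t\<in>{1..n+1}. \<exists>s\<in>S. M t s \<le> eps/2) \<and> card S = k"
  have ex: "?P (card {1..n+1})"
    by (rule exI[of _ "{1..n+1}"]) (use refl eps_pos in force)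
  have "?P (Least ?P)" by (rule LeastI[of ?P, OF ex])
  then obtain S where S: "S \<subseteq> {1..n+1}" "\<forall>t\<in>{1..n+1}. \<exists>s\<in>S. M t s \<le> eps/2"
    "card S = Least ?P" by blast
  define f where "f \<tau> = (SOME s. s \<in> S \<and> M \<tau> s \<le> eps/2)" for \<tau>
  have f: "f \<tau> \<in> S \<and> M \<tau> (f \<tau>) \<le> eps/2" if "\<tau> \<in> set ?L" for \<tau>
  proof -
    have "\<exists>s. s \<in> S \<and> M \<tau> s \<le> eps/2" using S(2) I(1) that by blast
    then show ?thesis unfolding f_def by (rule someI_ex)
  qed
  have inj: "inj_on f (set ?L)"
  proof (rule inj_onI, rule ccontr)
    fix a b assume a: "a \<in> set ?L" and b: "b \<in> set ?L" and fe: "f a = f b" and ne: "a \<noteq> b"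
    have a1: "a \<ge> 1" and b1: "b \<ge> 1" using a b I(1) by auto
    have s1: "f a \<ge> 1" using f[OF a] S(1) by auto
    have "M a b \<le> M a (f a) + M (f a) b" using tri[OF a1 b1 s1] .
    also have "M (f a) b = M b (f b)" using sym[OF s1 b1] fe by simp
    finally have "M a b \<le> eps" using f[OF a] f[OF b] by linarith
    then show False using I(4) a b ne by force
  qed
  have "card (set ?L) \<le> card S"
    by (rule card_inj_on_le[OF inj]) (use f S(1) finite_subset in auto)
  then show "macro_N M eps n \<le> covering_number M n (eps / 2)"
    unfolding covering_number_def using cl S(3) by simp
qed

end
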